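(* Let $\rho_p>0$, $\bar\rho_{ac}>0$, $\bar v_a>0$, $\bar u_d>0$, $C_D>0$, $\rho_{sn,p}>0$, $\Delta T^g_d\ge 0$ and an integer $\delta\ge 2$ be given. Let $\mathbf{r}_{d1},\dots,\mathbf{r}_{dN_d}\in\mathbb{R}^3$ ($N_d\ge2$) be pairwise distinct points, i.e. $\|\mathbf{r}_{dj}-\mathbf{r}_{dj'}\|>0$ for $j\ne j'$, and let $\mathbf{u}\in\mathbb{R}^3$ be a unit vector. For $R\ge 0$ define $\varrho_j(R)=\|R\mathbf{u}-\mathbf{r}_{dj}\|$, $\tilde\varrho_\delta(R)=\big(\sum_{j=1}^{N_d}\varrho_j(R)^\delta\big)^{1/\delta}$, $\bar\varrho_d(R)=\tilde\varrho_\delta(R)+\rho_{sn,p}$, and $$\bar T_d(\varrho)=\frac{1}{\lambda_0}\Big(\tanh^{-1}\!\big(\tfrac{v_{sw}(\varrho)}{\bar v_d}\big)+\tan^{-1}\!\big(\tfrac{v_{sw}(\varrho)}{\bar v_d}\big)\Big),$$ where $\lambda_0=\sqrt{\bar u_d C_D}$, $\bar v_d=\sqrt{\bar u_d/C_D}$, $v_{sw}(\varrho)=\sqrt{\frac{(\lambda-1)\bar u_d}{(\lambda+1)C_D}}$ with $\lambda=e^{2C_D\varrho}$. Define $$f(R)=\bar\rho_{ac}+R+\bar v_a\big(\bar T_d(\bar\varrho_d(R))+\Delta T^g_d\big).$$ Let $R^*$ be a point with $R^*>0$ at which $\frac{d\tilde\varrho_\delta}{dR}(R^* )=0$ (a minimizer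 of $\tilde\varrho_\delta$). Then $f$ is locally convex around $R^*$: there exists $\epsilon>0$ such that $\frac{d^2 f}{dR^2}(R)>0$ for all $R$ with $|R-R^*|<\epsilon$.
   Context: Interpretation: the protected area is a ball of radius $\rho_p$ centered at the origin; $\mathbf{r}_{dj}$ are defender positions; $\mathbf{u}$ is the direction of the attackers' center of mass, and $R\mathbf{u}$ is a candidate gathering center at distance $R$ from the origin on the attackers' shortest path to the protected area. $\varrho_j(R)$ is the distance of defender $j$ to the gathering center; $\tilde\varrho_\delta$ is an upper approximation of $\max_j\varrho_j$; $\rho_{sn,p}$ is the radius of the planar gathering formation; $\bar T_d(\varrho)$ is the time-optimal travel time over distance $\varrho$ for an agent with acceleration bound $\bar u_d$ and quadratic drag coefficient $C_D$ starting from rest; $\bar v_a$ is the attackers' maximum speed; $\bar\rho_{ac}$ is the maximum connectivity radius of the attacker swarm. *)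

theory Defs
  imports "HOL-Analysis.Analysis"
begin

definition varrho :: "real ^ 3 \<Rightarrow> real ^ 3 \<Rightarrow> real \<Rightarrow> real" where
  "varrho u rj R = norm (R *\<^sub>R u - rj)"

text \<open>Upper approximation of the maximal defender distance (delta-norm).\<close>
definition tilde_varrho :: "nat \<Rightarrow> nat \<Rightarrow> (nat \<Rightarrow> real ^ 3) \<Rightarrow> real ^ 3 \<Rightarrow> real \<Rightarrow> real" where
  "tilde_varrho \<delta> Nd rd u R = root \<delta> (\<Sum>j<Nd. (varrho u (rd j) R) ^ \<delta>)"

text \<open>Time-optimal travel time over distance rho (acceleration bound ud, drag CD).\<close>
definition T_bar_d :: "real \<Rightarrow> real \<Rightarrow> real \<Rightarrow> real" where
  "T_bar_d ud CD \<rho> =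
     (let lam0 = sqrt (ud * CD);
          vbar = sqrt (ud / CD);
          lam = exp (2 * CD * \<rho>);
          vsw = sqrt (((lam - 1) * ud) / ((lam + 1) * CD))
      in (1 / lam0) * (artanh (vsw / vbar) + arctan (vsw / vbar)))"

definition f_gather ::
  "real \<Rightarrow> real \<Rightarrow> real \<Rightarrow> real \<Rightarrow> real \<Rightarrow> real \<Rightarrow> nat \<Rightarrow> nat \<Rightarrow> (nat \<Rightarrow> real ^ 3) \<Rightarrow> real ^ 3 \<Rightarrow> real \<Rightarrow> real" where
  "f_gather rho_ac va ud CD rho_snp dTg \<delta> Nd rd u R =
     rho_ac + R + va * (T_bar_d ud CD (tilde_varrho \<delta> Nd rd u R + rho_snp) + dTg)"

end

theory Submission imports Defs begin


lemma sq_der: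
  fixes c x :: real assumes q: "x^2 + c > 0"
  shows "((\<lambda>x. sqrt (x^2+c)) has_real_derivative x / sqrt (x^2+c)) (at x)"
  using q by (auto intro!: derivative_eq_intros simp: field_simps)

lemma H_der_pos:
  fixes c x :: real assumes q: "x^2 + c > 0" and n: "n \<ge> 2"
  shows "((\<lambda>x. sqrt (x^2+c)^n) has_real_derivative real n * (x * sqrt (x^2+c)^(n-2))) (at x)"
proof -
  have "((\<lambda>x. sqrt (x^2+c)^n) has_real_derivative real n * sqrt (x^2+c)^(n - Suc 0) * (x / sqrt (x^2+c))) (at x)"
    by (rule DERIV_pow[THEN DERIV_chain2, OF sq_der[OF q]])
  moreover have "n - Suc 0 = Suc (n-2)" using n by simp
  moreover have "sqrt (x^2+c) > 0" using q by simp
  ultimately show ?thesis by (simp add: field_simps)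
qed

definition Dr :: "nat \<Rightarrow> real \<Rightarrow> real \<Rightarrow> real" where
  "Dr n c x = sqrt (x^2+c)^(n-2) + real (n-2) * x^2 * sqrt (x^2+c)^(n-3) / sqrt (x^2+c)"

lemma G_der_pos:
  fixes c x :: real assumes q: "x^2 + c > 0" and n: "n \<ge> 2"
  shows "((\<lambda>x. x * sqrt (x^2+c)^(n-2)) has_real_derivative Dr n c x) (at x)"
proof -
  have d: "((\<lambda>x. sqrt (x^2+c)^(n-2)) has_real_derivative real (n-2) * sqrt (x^2+c)^(n-2 - Suc 0) * (x / sqrt (x^2+c))) (at x)"
    by (rule DERIV_pow[THEN DERIV_chain2, OF sq_der[OF q]])
  have "((\<lambda>x. x * sqrt (x^2+c)^(n-2)) has_real_derivative x * (real (n-2) * sqrt (x^2+c)^(n-2 - Suc 0) * (x / sqrt (x^2+c))) + 1 * sqrt (x^2+c)^(n-2)) (at x)"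
    by (rule DERIV_mult'[OF DERIV_ident d])
  moreover have "n - 2 - Suc 0 = n - 3" by simp
  moreover have "x * (real (n-2) * sqrt (x^2+c)^(n-3) * (x / sqrt (x^2+c))) + 1 * sqrt (x^2+c)^(n-2) = Dr n c x"
    unfolding Dr_def by (simp add: power2_eq_square)
  ultimately show ?thesis by simp
qed

lemma H_der:
  fixes c x :: real assumes c: "c \<ge> 0" and n: "n \<ge> 2"
  shows "((\<lambda>x. sqrt (x^2+c)^n) has_real_derivative real n * (x * sqrt (x^2+c)^(n-2))) (at x)"
proof (cases "x^2 + c > 0")
  case True then show ?thesis using H_der_pos n by blast
next
  case False
  then have "x^2 = 0 \<and> c = 0" using c by (smt (verit) zero_le_power2)
  then have x0: "x = 0" and c0: "c = 0" by auto
  show ?thesis unfolding x0 c0 CARAT_DERIV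
  proof (intro exI conjI allI)
    fix z :: real
    have "\<bar>z\<bar> ^ n = \<bar>z\<bar> ^ (n-2) * \<bar>z\<bar> ^ 2"
      using n by (metis le_add_diff_inverse2 power_add)
    also have "\<dots> = z * \<bar>z\<bar> ^ (n-2) * z" by (simp add: power2_eq_square)
    finally have "\<bar>z\<bar> ^ n = z * \<bar>z\<bar> ^ (n-2) * z" .
    moreover have "(0::real)^n = 0" using n by simp
    ultimately show "sqrt (z^2 + 0)^n - sqrt (0^2+0)^n = z * sqrt (z^2)^(n-2) * (z - 0)"
      by simp
  next
    show "isCont (\<lambda>z. z * sqrt (z^2)^(n-2)) 0" by (intro continuous_intros)
  qed (use n in simp)
qed

lemma G_der:
  fixes c x :: real assumes c: "c \<ge> 0" and n: "n \<ge> 2"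
  shows "((\<lambda>x. x * sqrt (x^2+c)^(n-2)) has_real_derivative Dr n c x) (at x)"
proof (cases "x^2 + c > 0")
  case True then show ?thesis using G_der_pos n by blast
next
  case False
  then have "x^2 = 0 \<and> c = 0" using c by (smt (verit) zero_le_power2)
  then have x0: "x = 0" and c0: "c = 0" by auto
  show ?thesis unfolding x0 c0 CARAT_DERIV
  proof (intro exI conjI allI)
    fix z :: real
    show "z * sqrt (z^2 + 0)^(n-2) - 0 * sqrt (0^2+0)^(n-2) = sqrt (z^2)^(n-2) * (z - 0)"
      by simp
  next
    show "isCont (\<lambda>z. sqrt (z^2)^(n-2)) 0" by (intro continuous_intros)
  qed (simp add: Dr_def)
qed

lemma Dr_ge: "c \<ge> 0 \<Longrightarrow> Dr n c x \<ge> sqrt (x^2+c)^(n-2)"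
  unfolding Dr_def by (auto intro!: divide_nonneg_nonneg mult_nonneg_nonneg)




lemma aux_w: assumes "(E::real) > 0" shows "((E*(0*r+1*(2*CD)) - 0)*(E+1) - (E-1)*(E*(0*r+1*(2*CD))+0)) / ((E+1)*(E+1)) = CD*(1-((E-1)/(E+1))^2)"
proof -
  have ee: "E*E > 0" using assms by simp
  have d: "E + 1 \<noteq> 0" "1 + (E*E+E*2) \<noteq> 0" "(E+1)*(E+1) \<noteq> 0" using assms ee by (auto, linarith)
  show ?thesis using d by (simp add: field_simps power2_eq_square)
qed
lemma aux_T0: assumes "(t::real) \<noteq> 1" "t \<noteq> -1" "s^2 = t" shows
  "K*((1/(1-s^2))*(a*(1-t^2)) + inverse(1+s^2)*(a*(1-t^2))) = 2*K*a"
proof -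
  have e: "1-t^2 = (1-t)*(1+t)" by algebra
  have n: "1 - t \<noteq> 0" "1 + t \<noteq> 0" using assms by auto
  have "(1/(1-t))*(a*((1-t)*(1+t))) = (a*(1+t))*((1-t)*inverse(1-t))" by (simp add: field_simps)
  also have "\<dots> = a*(1+t)" using n by simp
  finally have 1: "(1/(1-t))*(a*(1-t^2)) = a*(1+t)" unfolding e .
  have "inverse(1+t)*(a*((1-t)*(1+t))) = (a*(1-t))*((1+t)*inverse(1+t))" by (simp add: algebra_simps)
  also have "\<dots> = a*(1-t)" using n by simp
  finally have 2: "inverse(1+t)*(a*(1-t^2)) = a*(1-t)" unfolding e .
  show ?thesis unfolding assms(3) 1 2 by (simp add: algebra_simps)
qed

lemma aux_div: "(u::real) \<noteq> 0 \<Longrightarrow> c \<noteq> 0 \<Longrightarrow> ((a*u)/(b*c))/(u/c) = a/b"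
  by (simp add: divide_simps)

lemma aux_T1:
  fixes s w KK CC :: real
  assumes "s > 0" "w = s * s"
  shows "- (KK / s^2) * ((inverse s / 2 * CC) * (1 - w^2)) = - KK / 2 * (CC * (1 - w^2)) / (w * s)"
  using assms by (simp add: field_simps power2_eq_square)

lemma aux_K: fixes A C s :: real shows "2*A*(inverse s/2*C) = A*C/s"
  by (simp add: field_simps)

lemma aux_b: "(E::real) > 1 \<Longrightarrow> 0 < (E-1)/(E+1) \<and> (E-1)/(E+1) < 1"
  by (auto simp: divide_less_eq)

definition ww :: "real \<Rightarrow> real \<Rightarrow> real" where
  "ww CD r = (exp (2*CD*r) - 1) / (exp (2*CD*r) + 1)"

lemma ww_der: "((ww CD) has_real_derivative CD * (1 - (ww CD r)^2)) (at r)"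
proof -
  have p: "exp (2*CD*r) + 1 > 0" by (smt (verit) exp_gt_zero)
  show ?thesis unfolding ww_def[abs_def]
    apply (rule derivative_eq_intros refl)+
    using p aux_w[of "exp (2*CD*r)" r CD] by auto
qed

lemma ww_bounds: "CD > 0 \<Longrightarrow> r > 0 \<Longrightarrow> 0 < ww CD r \<and> ww CD r < 1"
proof -
  assume "CD > 0" "r > 0"
  then have "exp (2*CD*r) > 1" by simp
  then show ?thesis unfolding ww_def by (rule aux_b)
qed

lemma Tbar_eq:
  assumes "ud > 0" "CD > 0"
  shows "T_bar_d ud CD \<rho> = (1 / sqrt (ud*CD)) * (artanh (sqrt (ww CD \<rho>)) + arctan (sqrt (ww CD \<rho>)))"
proof -
  have p: "exp (2*CD*\<rho>) + 1 > 0" by (smt (verit) exp_gt_zero)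
  have "sqrt (((exp (2*CD*\<rho>) - 1) * ud) / ((exp (2*CD*\<rho>) + 1) * CD)) / sqrt (ud / CD)
        = sqrt ((((exp (2*CD*\<rho>) - 1) * ud) / ((exp (2*CD*\<rho>) + 1) * CD)) / (ud / CD))"
    by (simp only: real_sqrt_divide)
  also have "(((exp (2*CD*\<rho>) - 1) * ud) / ((exp (2*CD*\<rho>) + 1) * CD)) / (ud / CD) = ww CD \<rho>"
    unfolding ww_def using assms by (intro aux_div) auto
  finally show ?thesis unfolding T_bar_d_def Let_def by simp
qed

lemma sqw_der:
  assumes "CD > 0" "r > 0"
  shows "((\<lambda>r. sqrt (ww CD r)) has_real_derivative (inverse (sqrt (ww CD r)) / 2 * CD) * (1 - (ww CD r)^2)) (at r)"
proof -
  have "((\<lambda>r. sqrt (ww CD r)) has_real_derivative (inverse (sqrt (ww CD r)) / 2) * (CD * (1 - (ww CD r)^2))) (at r)"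
    using ww_bounds[OF assms] by (intro DERIV_chain2[OF DERIV_real_sqrt ww_der]) auto
  then show ?thesis by (simp add: mult.assoc)
qed

definition T1 :: "real \<Rightarrow> real \<Rightarrow> real \<Rightarrow> real" where
  "T1 ud CD r = (1 / sqrt (ud*CD)) * CD / sqrt (ww CD r)"
definition T2 :: "real \<Rightarrow> real \<Rightarrow> real \<Rightarrow> real" where
  "T2 ud CD r = - ((1 / sqrt (ud*CD)) * CD) / 2 * (CD * (1 - (ww CD r)^2)) / (ww CD r * sqrt (ww CD r))"

lemma T_der:
  assumes "ud > 0" "CD > 0" "r > 0"
  shows "(T_bar_d ud CD has_real_derivative T1 ud CD r) (at r)"
proof -
  let ?w = "ww CD r"
  let ?s = "sqrt (ww CD r)"
  let ?d = "(inverse ?s / 2 * CD) * (1 - ?w^2)"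
  have wb: "0 < ?w" "?w < 1" using ww_bounds assms by auto
  have sb: "0 < ?s" "?s < 1" using wb by auto
  have s2: "?s^2 = ?w" using wb by simp
  have sa: "\<bar>?s\<bar> < 1" using sb by linarith
  have a: "((\<lambda>r. artanh (sqrt (ww CD r))) has_real_derivative (1 / (1 - ?s^2)) * ?d) (at r)"
    by (rule DERIV_chain2[OF artanh_real_has_field_derivative[OF sa] sqw_der[OF assms(2,3)]])
  have b: "((\<lambda>r. arctan (sqrt (ww CD r))) has_real_derivative inverse (1 + ?s^2) * ?d) (at r)"
    by (rule DERIV_chain2[OF DERIV_arctan sqw_der[OF assms(2,3)]])
  have c: "((\<lambda>r. (1 / sqrt (ud*CD)) * (artanh (sqrt (ww CD r)) + arctan (sqrt (ww CD r)))) has_real_derivative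
     (1 / sqrt (ud*CD)) * ((1 / (1 - ?s^2)) * ?d + inverse (1 + ?s^2) * ?d)) (at r)"
    by (rule DERIV_cmult[OF DERIV_add[OF a b]])
  have "(1 / sqrt (ud*CD)) * ((1 / (1 - ?s^2)) * ?d + inverse (1 + ?s^2) * ?d) = 2 * (1 / sqrt (ud*CD)) * (inverse ?s / 2 * CD)"
  proof (rule aux_T0[where t="ww CD r" and s="sqrt (ww CD r)"])
    show "ww CD r \<noteq> 1" "ww CD r \<noteq> -1" using wb by auto
    show "sqrt (ww CD r)^2 = ww CD r" by (rule s2)
  qed
  also have "\<dots> = T1 ud CD r" unfolding T1_def by (rule aux_K)
  finally have e: "(1 / sqrt (ud*CD)) * ((1 / (1 - ?s^2)) * ?d + inverse (1 + ?s^2) * ?d) = T1 ud CD r" .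
  have f: "T_bar_d ud CD = (\<lambda>r. (1 / sqrt (ud*CD)) * (artanh (sqrt (ww CD r)) + arctan (sqrt (ww CD r))))"
    by (intro ext Tbar_eq[OF assms(1,2)])
  show ?thesis using c unfolding e f .
qed

lemma T1_der:
  assumes "ud > 0" "CD > 0" "r > 0"
  shows "(T1 ud CD has_real_derivative T2 ud CD r) (at r)"
proof -
  let ?w = "ww CD r"
  let ?s = "sqrt (ww CD r)"
  define K where "K = (1 / sqrt (ud*CD)) * CD"
  have wb: "0 < ?w" "?w < 1" using ww_bounds assms by auto
  have sb: "0 < ?s" using wb by auto
  have s2: "?s * ?s = ?w" using wb by simp
  have a: "((\<lambda>y. K / y) has_real_derivative - (K / ?s^2)) (at ?s)"
    using sb by (auto intro!: derivative_eq_intros simp: field_simps power2_eq_square)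
  have c: "((\<lambda>r. K / sqrt (ww CD r)) has_real_derivative - (K / ?s^2) * ((inverse ?s / 2 * CD) * (1 - ?w^2))) (at r)"
    by (rule DERIV_chain2[OF a sqw_der[OF assms(2,3)]])
  have e: "- (K / ?s^2) * ((inverse ?s / 2 * CD) * (1 - ?w^2)) = T2 ud CD r"
    unfolding T2_def K_def[symmetric] by (rule aux_T1[OF sb s2[symmetric]])
  have f: "T1 ud CD = (\<lambda>r. K / sqrt (ww CD r))" unfolding T1_def K_def by auto
  show ?thesis using c unfolding e f .
qed

lemma T1_pos: "ud > 0 \<Longrightarrow> CD > 0 \<Longrightarrow> r > 0 \<Longrightarrow> T1 ud CD r > 0"
  unfolding T1_def using ww_bounds[of CD r] by simp

lemma T1_cont: "ud > 0 \<Longrightarrow> CD > 0 \<Longrightarrow> r > 0 \<Longrightarrow> isCont (T1 ud CD) r"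
  using T1_der DERIV_isCont by blast

lemma T2_cont: assumes "ud > 0" "CD > 0" "r > 0" shows "isCont (T2 ud CD) r"
proof -
  have cw: "isCont (ww CD) r" by (rule DERIV_isCont[OF ww_der])
  have b: "ww CD r > 0" using ww_bounds assms by auto
  have cs: "isCont (\<lambda>r. sqrt (ww CD r)) r" by (intro continuous_intros cw)
  have "isCont (\<lambda>r. - ((1 / sqrt (ud*CD)) * CD) / 2 * (CD * (1 - (ww CD r)^2)) / (ww CD r * sqrt (ww CD r))) r"
    apply (rule isCont_divide)
    apply (intro continuous_intros cw)
    apply (intro continuous_intros cw cs)
    using b by simp
  then show ?thesis unfolding T2_def[abs_def] .
qed

lemma varrho_eq:
  fixes u r :: "real ^ 3"
  assumes "norm u = 1"
  shows "varrho u r R = sqrt ((R - inner u r)^2 + ((norm r)^2 - (inner u r)^2))"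
proof -
  have uu: "inner u u = 1" using assms power2_norm_eq_inner[of u] by simp
  have "inner (R *\<^sub>R u - r) (R *\<^sub>R u - r) = R*R*inner u u - 2*R*inner u r + inner r r"
    by (simp add: inner_diff_left inner_diff_right inner_commute algebra_simps)
  also have "\<dots> = (R - inner u r)^2 + ((norm r)^2 - (inner u r)^2)"
    using uu power2_norm_eq_inner[of r] by (simp add: power2_eq_square algebra_simps)
  finally show ?thesis unfolding varrho_def norm_eq_sqrt_inner by simp
qed

lemma cc_nonneg:
  fixes u r :: "real ^ 3"
  assumes "norm u = 1"
  shows "(norm r)^2 - (inner u r)^2 \<ge> 0"
proof -
  have "\<bar>inner u r\<bar> \<le> \<bar>norm r\<bar>" using Cauchy_Schwarz_ineq2[of u r] assms by simp
  then show ?thesis using abs_le_square_iff[of "inner u r" "norm r"] by simp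
qed

lemma sum_pos:
  fixes rd :: "nat \<Rightarrow> real ^ 3"
  assumes "Nd \<ge> 2"
    and dist: "\<And>j j'. j < Nd \<Longrightarrow> j' < Nd \<Longrightarrow> j \<noteq> j' \<Longrightarrow> norm (rd j - rd j') > 0"
  shows "(\<Sum>j<Nd. varrho u (rd j) R ^ m) > 0"
proof -
  have nn: "\<And>j. varrho u (rd j) R ^ m \<ge> 0" unfolding varrho_def by simp
  have "\<exists>j<Nd. varrho u (rd j) R > 0"
  proof (rule ccontr)
    assume "\<not> ?thesis"
    then have z: "\<And>j. j < Nd \<Longrightarrow> varrho u (rd j) R \<le> 0" using not_less by blast
    have e: "\<And>j. j < Nd \<Longrightarrow> rd j = R *\<^sub>R u"
    proof -
      fix j assume "j < Nd"
      then have "norm (R *\<^sub>R u - rd j) \<le> 0" using z unfolding varrho_def by blast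
      then show "rd j = R *\<^sub>R u" by simp
    qed
    have "rd 0 = rd 1" using e[of 0] e[of 1] assms(1) by simp
    then show False using dist[of 0 1] assms(1) by simp
  qed
  then obtain j where j: "j < Nd" "varrho u (rd j) R > 0" by blast
  have "varrho u (rd j) R ^ m > 0" using j by simp
  also have "varrho u (rd j) R ^ m \<le> (\<Sum>j<Nd. varrho u (rd j) R ^ m)"
    by (rule member_le_sum) (use j nn in auto)
  finally show ?thesis .
qed

lemma H_shift:
  fixes c a :: real assumes c: "c \<ge> 0" and n: "n \<ge> 2"
  shows "((\<lambda>R. sqrt ((R-a)^2+c)^n) has_real_derivative real n * ((R-a) * sqrt ((R-a)^2+c)^(n-2))) (at R)"
proof -
  have d: "((\<lambda>R. R - a) has_real_derivative 1 - 0) (at R)" by (rule DERIV_diff[OF DERIV_ident DERIV_const])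
  show ?thesis using DERIV_chain2[OF H_der[OF c n, of "R - a"] d] by simp
qed

lemma G_shift:
  fixes c a :: real assumes c: "c \<ge> 0" and n: "n \<ge> 2"
  shows "((\<lambda>R. (R-a) * sqrt ((R-a)^2+c)^(n-2)) has_real_derivative Dr n c (R-a)) (at R)"
proof -
  have d: "((\<lambda>R. R - a) has_real_derivative 1 - 0) (at R)" by (rule DERIV_diff[OF DERIV_ident DERIV_const])
  show ?thesis using DERIV_chain2[OF G_der[OF c n, of "R - a"] d] by simp
qed

theorem lemma2:
  fixes rho_p rho_ac va ud CD rho_snp dTg Rstar :: real
    and \<delta> Nd :: nat
    and rd :: "nat \<Rightarrow> real ^ 3"
    and u :: "real ^ 3"
  assumes "rho_p > 0" and "rho_ac > 0" and "va > 0" and "ud > 0" and "CD > 0"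
    and "rho_snp > 0" and "dTg \<ge> 0" and "\<delta> \<ge> 2" and "Nd \<ge> 2"
    and "\<And>j j'. j < Nd \<Longrightarrow> j' < Nd \<Longrightarrow> j \<noteq> j' \<Longrightarrow> norm (rd j - rd j') > 0"
    and "norm u = 1"
    and "Rstar > 0"
    and "deriv (tilde_varrho \<delta> Nd rd u) Rstar = 0"
  shows "\<exists>\<epsilon>>0. \<forall>R. \<bar>R - Rstar\<bar> < \<epsilon> \<longrightarrow>
           deriv (deriv (f_gather rho_ac va ud CD rho_snp dTg \<delta> Nd rd u)) R > 0"
proof -
  note va = assms(3) and ud = assms(4) and CD = assms(5) and snp = assms(6)
    and dl = assms(8) and Nd = assms(9) and dist = assms(10) and un = assms(11) and hyp = assms(13)
  define a where "a = (\<lambda>j. inner u (rd j))"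
  define c where "c = (\<lambda>j. (norm (rd j))^2 - (inner u (rd j))^2)"
  have c0: "\<And>j. c j \<ge> 0" unfolding c_def using cc_nonneg[OF un] by blast
  have vr: "\<And>j R. varrho u (rd j) R = sqrt ((R - a j)^2 + c j)"
    unfolding a_def c_def using varrho_eq[OF un] by blast
  define Sf where "Sf = (\<lambda>R. \<Sum>j<Nd. sqrt ((R - a j)^2 + c j)^\<delta>)"
  define S1 where "S1 = (\<lambda>R. \<Sum>j<Nd. real \<delta> * ((R - a j) * sqrt ((R - a j)^2 + c j)^(\<delta>-2)))"
  define S2 where "S2 = (\<lambda>R. \<Sum>j<Nd. real \<delta> * Dr \<delta> (c j) (R - a j))"
  define Lf where "Lf = (\<lambda>R. \<Sum>j<Nd. real \<delta> * sqrt ((R - a j)^2 + c j)^(\<delta>-2))"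
  define p where "p = 1 / real \<delta>"
  have p0: "p > 0" unfolding p_def using dl by simp
  have Sf_pos: "\<And>R. Sf R > 0"
  proof -
    fix R
    have "Sf R = (\<Sum>j<Nd. varrho u (rd j) R ^ \<delta>)" unfolding Sf_def vr ..
    then show "Sf R > 0" using sum_pos[OF Nd dist] by simp
  qed
  have Lf_pos: "\<And>R. Lf R > 0"
  proof -
    fix R
    have "Lf R = real \<delta> * (\<Sum>j<Nd. varrho u (rd j) R ^ (\<delta>-2))" unfolding Lf_def vr sum_distrib_left ..
    then show "Lf R > 0" using sum_pos[OF Nd dist] dl by simp
  qed
  have S2_ge: "\<And>R. S2 R \<ge> Lf R"
    unfolding S2_def Lf_def using Dr_ge[OF c0] dl by (intro sum_mono mult_left_mono) auto
  have Sfd: "\<And>R. (Sf has_real_derivative S1 R) (at R)"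
    unfolding Sf_def S1_def by (rule DERIV_sum) (rule H_shift[OF c0 dl])
  have S1d: "\<And>R. (S1 has_real_derivative S2 R) (at R)"
    unfolding S1_def S2_def by (rule DERIV_sum) (rule DERIV_cmult[OF G_shift[OF c0 dl]])
  have tilde_eq: "tilde_varrho \<delta> Nd rd u = (\<lambda>R. Sf R powr p)"
  proof
    fix R
    have "tilde_varrho \<delta> Nd rd u R = root \<delta> (Sf R)" unfolding tilde_varrho_def Sf_def vr ..
    also have "\<dots> = Sf R powr p" unfolding p_def using dl Sf_pos[of R] by (intro root_powr_inverse) auto
    finally show "tilde_varrho \<delta> Nd rd u R = Sf R powr p" .
  qed
  have powd: "\<And>R q. ((\<lambda>R. Sf R powr q) has_real_derivative q * Sf R powr (q - 1) * S1 R) (at R)"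
    using DERIV_fun_powr[OF Sfd Sf_pos] by simp
  define g where "g = (\<lambda>R. Sf R powr p + rho_snp)"
  define g1 where "g1 = (\<lambda>R. p * Sf R powr (p - 1) * S1 R)"
  define g2 where "g2 = (\<lambda>R. p * (Sf R powr (p-1) * S2 R + (p-1) * Sf R powr (p-1-1) * S1 R * S1 R))"
  have gpos: "\<And>R. g R > 0" unfolding g_def using snp by (simp add: add_nonneg_pos)
  have gd: "\<And>R. (g has_real_derivative g1 R) (at R)"
  proof -
    fix R
    show "(g has_real_derivative g1 R) (at R)"
      unfolding g_def g1_def using DERIV_add[OF powd[where R=R and q=p] DERIV_const[of rho_snp]] by simp
  qed
  have g1d: "\<And>R. (g1 has_real_derivative g2 R) (at R)"
  proof -
    fix R
    have "((\<lambda>R. p * Sf R powr (p - 1) * S1 R) has_real_derivative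
        p * Sf R powr (p - 1) * S2 R + p * ((p-1) * Sf R powr (p - 1 - 1) * S1 R) * S1 R) (at R)"
      by (rule DERIV_mult'[OF DERIV_cmult[OF powd] S1d])
    moreover have "p * Sf R powr (p - 1) * S2 R + p * ((p-1) * Sf R powr (p - 1 - 1) * S1 R) * S1 R = g2 R"
      unfolding g2_def by (simp add: algebra_simps)
    ultimately show "(g1 has_real_derivative g2 R) (at R)" unfolding g1_def by simp
  qed
  have f_eq: "f_gather rho_ac va ud CD rho_snp dTg \<delta> Nd rd u = (\<lambda>R. rho_ac + R + va * (T_bar_d ud CD (g R) + dTg))"
    unfolding f_gather_def[abs_def] tilde_eq g_def by simp
  define f1 where "f1 = (\<lambda>R. 1 + va * (T1 ud CD (g R) * g1 R))"
  define f2 where "f2 = (\<lambda>R. va * (T1 ud CD (g R) * g2 R + T2 ud CD (g R) * g1 R * g1 R))"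
  have fd: "\<And>R. ((\<lambda>R. rho_ac + R + va * (T_bar_d ud CD (g R) + dTg)) has_real_derivative f1 R) (at R)"
  proof -
    fix R
    have tg: "((\<lambda>R. T_bar_d ud CD (g R)) has_real_derivative T1 ud CD (g R) * g1 R) (at R)"
      by (rule DERIV_chain2[OF T_der[OF ud CD gpos] gd])
    show "((\<lambda>R. rho_ac + R + va * (T_bar_d ud CD (g R) + dTg)) has_real_derivative f1 R) (at R)"
      using DERIV_add[OF DERIV_add[OF DERIV_const DERIV_ident] DERIV_cmult[OF DERIV_add[OF tg DERIV_const]], of rho_ac va dTg]
      unfolding f1_def by simp
  qed
  have f1d: "\<And>R. (f1 has_real_derivative f2 R) (at R)"
  proof -
    fix R
    have tg: "((\<lambda>R. T1 ud CD (g R)) has_real_derivative T2 ud CD (g R) * g1 R) (at R)"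
      by (rule DERIV_chain2[OF T1_der[OF ud CD gpos] gd])
    have m: "((\<lambda>R. T1 ud CD (g R) * g1 R) has_real_derivative T1 ud CD (g R) * g2 R + T2 ud CD (g R) * g1 R * g1 R) (at R)"
      by (rule DERIV_mult'[OF tg g1d])
    show "(f1 has_real_derivative f2 R) (at R)"
      using DERIV_add[OF DERIV_const DERIV_cmult[OF m], of 1 va]
      unfolding f1_def f2_def by simp
  qed
  have dd: "\<And>R. deriv (deriv (f_gather rho_ac va ud CD rho_snp dTg \<delta> Nd rd u)) R = f2 R"
  proof -
    have "deriv (f_gather rho_ac va ud CD rho_snp dTg \<delta> Nd rd u) = f1"
      unfolding f_eq by (intro ext DERIV_imp_deriv fd)
    moreover have "deriv f1 = f2" by (intro ext DERIV_imp_deriv f1d)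
    ultimately show "\<And>R. deriv (deriv (f_gather rho_ac va ud CD rho_snp dTg \<delta> Nd rd u)) R = f2 R" by simp
  qed
  have S1z: "S1 Rstar = 0"
  proof -
    have "deriv (tilde_varrho \<delta> Nd rd u) Rstar = p * Sf Rstar powr (p - 1) * S1 Rstar"
      unfolding tilde_eq by (rule DERIV_imp_deriv[OF powd])
    then have "p * Sf Rstar powr (p - 1) * S1 Rstar = 0" using hyp by simp
    then show ?thesis using p0 Sf_pos[of Rstar] by simp
  qed
  define A where "A = (\<lambda>R. T1 ud CD (g R))"
  define B where "B = (\<lambda>R. Sf R powr (p-1))"
  define C where "C = (\<lambda>R. Sf R powr (p-1-1))"
  define D where "D = (\<lambda>R. T2 ud CD (g R))"
  define F where "F = (\<lambda>R. va * (A R * (p * (B R * Lf R + (p-1) * C R * S1 R * S1 R)) + D R * g1 R * g1 R))"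
  have A0: "\<And>R. A R > 0" unfolding A_def using T1_pos[OF ud CD gpos] .
  have B0: "\<And>R. B R > 0" unfolding B_def using Sf_pos by (simp add: less_imp_neq[symmetric])
  have f2F: "\<And>R. f2 R \<ge> F R"
  proof -
    fix R
    have "B R * Lf R \<le> B R * S2 R" using B0[of R] S2_ge[of R] by (intro mult_left_mono) auto
    then have "p * (B R * Lf R + (p-1) * C R * S1 R * S1 R) \<le> g2 R"
      unfolding g2_def B_def C_def using p0 by (intro mult_left_mono) auto
    then have "A R * (p * (B R * Lf R + (p-1) * C R * S1 R * S1 R)) \<le> A R * g2 R"
      using A0[of R] by (intro mult_left_mono) auto
    moreover have "f2 R = va * (A R * g2 R + D R * g1 R * g1 R)" unfolding f2_def A_def D_def by simp
    ultimately show "f2 R \<ge> F R" unfolding F_def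
      using va by (simp add: mult_left_mono)
  qed
  have cg: "isCont g Rstar" by (rule DERIV_isCont[OF gd])
  have cA: "isCont A Rstar" unfolding A_def by (rule isCont_o2[OF cg T1_cont[OF ud CD gpos]])
  have cD: "isCont D Rstar" unfolding D_def by (rule isCont_o2[OF cg T2_cont[OF ud CD gpos]])
  have cB: "isCont B Rstar" unfolding B_def by (rule DERIV_isCont[OF powd])
  have cC: "isCont C Rstar" unfolding C_def by (rule DERIV_isCont[OF powd])
  have cS1: "isCont S1 Rstar" by (rule DERIV_isCont[OF S1d])
  have cg1: "isCont g1 Rstar" by (rule DERIV_isCont[OF g1d])
  have cL: "isCont Lf Rstar" unfolding Lf_def by (intro continuous_intros)
  have cF: "isCont F Rstar" unfolding F_def
    by (intro continuous_intros cA cB cC cD cS1 cg1 cL)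
  have g1z: "g1 Rstar = 0" unfolding g1_def S1z by simp
  have F0: "F Rstar > 0" unfolding F_def S1z g1z using va A0[of Rstar] B0[of Rstar] Lf_pos[of Rstar] p0
    by simp
  obtain e where e: "e > 0" "\<And>y. dist y Rstar < e \<Longrightarrow> dist (F y) (F Rstar) < F Rstar"
    using cF F0 unfolding continuous_at_eps_delta by meson
  show ?thesis
  proof (intro exI[of _ e] conjI allI impI)
    show "e > 0" by (rule e(1))
    fix R assume "\<bar>R - Rstar\<bar> < e"
    then have "dist (F R) (F Rstar) < F Rstar" using e(2) by (simp add: dist_real_def)
    then have "F R > 0" by (simp add: dist_real_def)
    then show "deriv (deriv (f_gather rho_ac va ud CD rho_snp dTg \<delta> Nd rd u)) R > 0"
      using dd f2F[of R] by simp
  qed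
qed

end
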